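(* Let $\prec$ be an exchangeable random total order on $\mathbb{I}_0=\{a_1,b_1,a_2,b_2,\dots\}$ and let $d$ be the associated function defined below. If $x,y \in \mathbb{I}_0$ with $x \ne y$, then $d(x,y) > 0$ almost surely. Therefore almost surely $d$ is a metric on $\mathbb{I}_0$.
   Context: $\mathbb{I}_0 := \bigcup_{n\in\mathbb{N}}\{a_n,b_n\}$ (all symbols distinct). A random total order $\prec$ on $\mathbb{I}_0$ is a map from the probability space to total orders on $\mathbb{I}_0$ such that $\mathbf{1}\{x\prec y\}$ is a random variable for all $x,y$. It is exchangeable if for every $n\in\mathbb{N}$ and all permutations $\sigma,\tau$ of $\{1,\dots,n\}$ the induced order $\prec^n$ on $\bigcup_{k=1}^n\{a_k,b_k\}$ has the same distribution as $\prec^n_{\sigma,\tau}$, defined by: $a_{\sigma(i)}\prec^n_{\sigma,\tau}b_{\tau(j)}$ iff $a_i\prec^n b_j$; $b_{\tau(i)}\prec^n_{\sigma,\tau}a_{\sigma(j)}$ iff $b_i\prec^n a_j$; $a_{\sigma(i)}\prec^n_{\sigma,\tau}a_{\sigma(j)}$ iff $a_i\prec^n a_j$; $b_{\tau(i)}\prec^n_{\sigma,\tau}b_{\tau(j)}$ iff $b_i\prec^n b_j$. Define $d:\mathbb{I}_0\times\mathbb{I}_0\to[0,1]$ by $d(x,x)=0$, $d(x,y)=d(y,x)$, and for $x\prec y$: \[ d(x,y) := \limsup_{n\to\infty}\frac{1}{2n}\#\{1\le k\le n: x\prec a_k\prec y\} + \limsup_{n\to\infty}\frac{1}{2n}\#\{1\le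 \ell\le n: x\prec b_\ell\prec y\}. \] *)

theory Defs
  imports "HOL-Probability.Probability" "HOL-Combinatorics.Permutations"
begin

text \<open>The index set I_0 = {a_1,b_1,a_2,b_2,...}; we index from 0: A k stands for a_(k+1),
  B k stands for b_(k+1).\<close>
datatype I0 = A nat | B nat

definition random_total_order :: "'w measure \<Rightarrow> ('w \<Rightarrow> I0 \<Rightarrow> I0 \<Rightarrow> bool) \<Rightarrow> bool" where
  "random_total_order M lt \<longleftrightarrow>
     (\<forall>w\<in>space M. (\<forall>x. \<not> lt w x x) \<and>
                    (\<forall>x y z. lt w x y \<longrightarrow> lt w y z \<longrightarrow> lt w x z) \<and>
                    (\<forall>x y. x \<noteq> y \<longrightarrow> lt w x y \<or> lt w y x)) \<and>
     (\<forall>x y. {w\<in>space M. lt w x y} \<in> sets M)"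

definition first_n :: "nat \<Rightarrow> I0 set" where
  "first_n n = A ` {..<n} \<union> B ` {..<n}"

definition restr_ord :: "(I0 \<Rightarrow> I0 \<Rightarrow> bool) \<Rightarrow> nat \<Rightarrow> (I0 \<times> I0) set" where
  "restr_ord lt n = {(x,y). x \<in> first_n n \<and> y \<in> first_n n \<and> lt x y}"

definition relabel :: "(nat \<Rightarrow> nat) \<Rightarrow> (nat \<Rightarrow> nat) \<Rightarrow> I0 \<Rightarrow> I0" where
  "relabel \<sigma> \<tau> x = (case x of A i \<Rightarrow> A (\<sigma> i) | B i \<Rightarrow> B (\<tau> i))"

definition perm_restr_ord :: "(nat \<Rightarrow> nat) \<Rightarrow> (nat \<Rightarrow> nat) \<Rightarrow> (I0 \<Rightarrow> I0 \<Rightarrow> bool) \<Rightarrow> nat \<Rightarrow> (I0 \<times> I0) set" where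
  "perm_restr_ord \<sigma> \<tau> lt n = map_prod (relabel \<sigma> \<tau>) (relabel \<sigma> \<tau>) ` restr_ord lt n"

definition exchangeable :: "'w measure \<Rightarrow> ('w \<Rightarrow> I0 \<Rightarrow> I0 \<Rightarrow> bool) \<Rightarrow> bool" where
  "exchangeable M lt \<longleftrightarrow>
     (\<forall>n \<sigma> \<tau>. \<sigma> permutes {..<n} \<longrightarrow> \<tau> permutes {..<n} \<longrightarrow>
        (\<forall>R. measure M {w\<in>space M. restr_ord (lt w) n = R}
           = measure M {w\<in>space M. perm_restr_ord \<sigma> \<tau> (lt w) n = R}))"

definition d_pos :: "(I0 \<Rightarrow> I0 \<Rightarrow> bool) \<Rightarrow> I0 \<Rightarrow> I0 \<Rightarrow> real" where
  "d_pos lt x y =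
     real_of_ereal (limsup (\<lambda>n. ereal (real (card {k. k < n \<and> lt x (A k) \<and> lt (A k) y}) / (2 * real n))))
   + real_of_ereal (limsup (\<lambda>n. ereal (real (card {k. k < n \<and> lt x (B k) \<and> lt (B k) y}) / (2 * real n))))"

definition dist_ord :: "(I0 \<Rightarrow> I0 \<Rightarrow> bool) \<Rightarrow> I0 \<Rightarrow> I0 \<Rightarrow> real" where
  "dist_ord lt x y = (if x = y then 0 else if lt x y then d_pos lt x y else d_pos lt y x)"

definition is_metric :: "(I0 \<Rightarrow> I0 \<Rightarrow> real) \<Rightarrow> bool" where
  "is_metric d \<longleftrightarrow> (\<forall>x y. d x y = 0 \<longleftrightarrow> x = y) \<and> (\<forall>x y. d x y = d y x)
      \<and> (\<forall>x y z. d x z \<le> d x y + d y z)"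

end

theory Submission
  imports Defs
begin



definition btw :: "(I0 \<Rightarrow> I0 \<Rightarrow> bool) \<Rightarrow> I0 \<Rightarrow> I0 \<Rightarrow> I0 \<Rightarrow> bool" where
  "btw lt x y z \<longleftrightarrow> (lt x z \<and> lt z y) \<or> (lt y z \<and> lt z x)"

definition cntw :: "(I0 \<Rightarrow> I0 \<Rightarrow> bool) \<Rightarrow> nat \<Rightarrow> I0 \<Rightarrow> I0 \<Rightarrow> nat" where
  "cntw lt n x y = card {z\<in>first_n n. btw lt x y z}"

definition sto :: "(I0 \<Rightarrow> I0 \<Rightarrow> bool) \<Rightarrow> bool" where
  "sto lt \<longleftrightarrow> (\<forall>x. \<not> lt x x) \<and> (\<forall>x y z. lt x y \<longrightarrow> lt y z \<longrightarrow> lt x z) \<and>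
                    (\<forall>x y. x \<noteq> y \<longrightarrow> lt x y \<or> lt y x)"

lemma finite_first_n[simp]: "finite (first_n n)"
  by (simp add: first_n_def)

lemma card_first_n: "card (first_n n) = 2 * n"
proof -
  have "card (A ` {..<n} \<union> B ` {..<n}) = card (A ` {..<n}) + card (B ` {..<n})"
    by (rule card_Un_disjoint) auto
  also have "\<dots> = 2 * n" by (simp add: card_image inj_on_def)
  finally show ?thesis by (simp add: first_n_def)
qed

lemma inj_gap:
  fixes lt :: "'a \<Rightarrow> 'a \<Rightarrow> bool"
  assumes irr: "\<And>x. \<not> lt x x" and tr: "\<And>x y z. lt x y \<Longrightarrow> lt y z \<Longrightarrow> lt x z"
    and tot: "\<And>x y. x \<noteq> y \<Longrightarrow> lt x y \<or> lt y x" and fin: "finite F"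
  shows "inj_on (\<lambda>y. card {z\<in>F. lt x z \<and> lt z y}) {y\<in>F. lt x y}"
proof -
  have less: "card {z\<in>F. lt x z \<and> lt z y1} < card {z\<in>F. lt x z \<and> lt z y2}"
    if "y1 \<in> F" "lt x y1" "lt y1 y2" for y1 y2
  proof (rule psubset_card_mono)
    show "finite {z\<in>F. lt x z \<and> lt z y2}" using fin by simp
    have "{z\<in>F. lt x z \<and> lt z y1} \<subseteq> {z\<in>F. lt x z \<and> lt z y2}" using that tr by blast
    moreover have "y1 \<in> {z\<in>F. lt x z \<and> lt z y2}" "y1 \<notin> {z\<in>F. lt x z \<and> lt z y1}"
      using that irr by auto
    ultimately show "{z\<in>F. lt x z \<and> lt z y1} \<subset> {z\<in>F. lt x z \<and> lt z y2}" by blast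
  qed
  show ?thesis
  proof (rule inj_onI)
    fix y1 y2 assume a: "y1 \<in> {y\<in>F. lt x y}" "y2 \<in> {y\<in>F. lt x y}"
      and e: "card {z\<in>F. lt x z \<and> lt z y1} = card {z\<in>F. lt x z \<and> lt z y2}"
    show "y1 = y2"
    proof (rule ccontr)
      assume "y1 \<noteq> y2"
      then have "lt y1 y2 \<or> lt y2 y1" using tot by blast
      then show False using less[of y1 y2] less[of y2 y1] a e by auto
    qed
  qed
qed

lemma card_gap_le:
  fixes lt :: "'a \<Rightarrow> 'a \<Rightarrow> bool"
  assumes irr: "\<And>x. \<not> lt x x" and tr: "\<And>x y z. lt x y \<Longrightarrow> lt y z \<Longrightarrow> lt x z"
    and tot: "\<And>x y. x \<noteq> y \<Longrightarrow> lt x y \<or> lt y x" and fin: "finite F"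
  shows "card {y\<in>F. lt x y \<and> card {z\<in>F. lt x z \<and> lt z y} \<le> m} \<le> Suc m"
proof -
  let ?g = "\<lambda>y. card {z\<in>F. lt x z \<and> lt z y}"
  have "inj_on ?g {y\<in>F. lt x y \<and> ?g y \<le> m}"
    by (rule inj_on_subset[OF inj_gap[OF irr tr tot fin]]) auto
  moreover have "?g ` {y\<in>F. lt x y \<and> ?g y \<le> m} \<subseteq> {..m}" by auto
  ultimately have "card {y\<in>F. lt x y \<and> ?g y \<le> m} \<le> card {..m}"
    by (intro card_inj_on_le) auto
  then show ?thesis by simp
qed

lemma cnt_close_le:
  assumes "sto lt"
  shows "card {y\<in>first_n n. y \<noteq> x \<and> cntw lt n x y \<le> m} \<le> 2 * Suc m"
proof -
  let ?F = "first_n n"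
  have irr: "\<And>x. \<not> lt x x" and tr: "\<And>x y z. lt x y \<Longrightarrow> lt y z \<Longrightarrow> lt x z"
    and tot: "\<And>x y. x \<noteq> y \<Longrightarrow> lt x y \<or> lt y x" using assms by (auto simp: sto_def)
  have irr': "\<And>x. \<not> (\<lambda>a b. lt b a) x x" using irr by simp
  have tr': "\<And>x y z. (\<lambda>a b. lt b a) x y \<Longrightarrow> (\<lambda>a b. lt b a) y z \<Longrightarrow> (\<lambda>a b. lt b a) x z"
    using tr by blast
  have tot': "\<And>x y. x \<noteq> y \<Longrightarrow> (\<lambda>a b. lt b a) x y \<or> (\<lambda>a b. lt b a) y x" using tot by blast
  have "{y\<in>?F. y \<noteq> x \<and> cntw lt n x y \<le> m} \<subseteq>
        {y\<in>?F. lt x y \<and> card {z\<in>?F. lt x z \<and> lt z y} \<le> m} \<union>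
        {y\<in>?F. lt y x \<and> card {z\<in>?F. lt z x \<and> lt y z} \<le> m}"
  proof
    fix y assume y: "y \<in> {y\<in>?F. y \<noteq> x \<and> cntw lt n x y \<le> m}"
    show "y \<in> {y\<in>?F. lt x y \<and> card {z\<in>?F. lt x z \<and> lt z y} \<le> m} \<union>
        {y\<in>?F. lt y x \<and> card {z\<in>?F. lt z x \<and> lt y z} \<le> m}"
    proof (cases "lt x y")
      case True
      then have "{z\<in>?F. btw lt x y z} = {z\<in>?F. lt x z \<and> lt z y}"
        unfolding btw_def using tr irr by blast
      then show ?thesis using y True by (auto simp: cntw_def)
    next
      case False
      then have l: "lt y x" using tot y by blast
      then have "{z\<in>?F. btw lt x y z} = {z\<in>?F. lt z x \<and> lt y z}"
        unfolding btw_def using tr irr by blast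
      then show ?thesis using y l by (auto simp: cntw_def)
    qed
  qed
  then have "card {y\<in>?F. y \<noteq> x \<and> cntw lt n x y \<le> m} \<le>
        card ({y\<in>?F. lt x y \<and> card {z\<in>?F. lt x z \<and> lt z y} \<le> m} \<union>
        {y\<in>?F. lt y x \<and> card {z\<in>?F. lt z x \<and> lt y z} \<le> m})"
    by (intro card_mono) auto
  also have "\<dots> \<le> card {y\<in>?F. lt x y \<and> card {z\<in>?F. lt x z \<and> lt z y} \<le> m} +
        card {y\<in>?F. lt y x \<and> card {z\<in>?F. lt z x \<and> lt y z} \<le> m}"
    by (rule card_Un_le)
  also have "\<dots> \<le> Suc m + Suc m"
  proof (rule add_mono)
    show "card {y\<in>?F. lt x y \<and> card {z\<in>?F. lt x z \<and> lt z y} \<le> m} \<le> Suc m"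
      apply (rule card_gap_le[where lt=lt])
      apply (rule irr)
      apply (rule tr, assumption+)
      apply (drule tot, assumption)
      by simp
    show "card {y\<in>?F. lt y x \<and> card {z\<in>?F. lt z x \<and> lt y z} \<le> m} \<le> Suc m"
      apply (rule card_gap_le[where lt="\<lambda>a b. lt b a"])
      apply (rule irr)
      apply (rule tr, assumption+)
      apply (drule tot, blast)
      by simp
  qed
  finally show ?thesis by simp
qed

definition cntR :: "(I0 \<times> I0) set \<Rightarrow> nat \<Rightarrow> I0 \<Rightarrow> I0 \<Rightarrow> nat" where
  "cntR R n x y = card {z\<in>first_n n. ((x,z)\<in>R \<and> (z,y)\<in>R) \<or> ((y,z)\<in>R \<and> (z,x)\<in>R)}"

lemma cntR_restr:
  assumes "x \<in> first_n n" "y \<in> first_n n"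
  shows "cntR (restr_ord L n) n x y = cntw L n x y"
proof -
  have "{z\<in>first_n n. ((x,z)\<in>restr_ord L n \<and> (z,y)\<in>restr_ord L n) \<or> ((y,z)\<in>restr_ord L n \<and> (z,x)\<in>restr_ord L n)}
     = {z\<in>first_n n. btw L x y z}"
    using assms by (auto simp: restr_ord_def btw_def)
  then show ?thesis by (simp add: cntR_def cntw_def)
qed

lemma relabel_invol:
  assumes "\<And>i. \<sigma> (\<sigma> i) = i" "\<And>i. \<tau> (\<tau> i) = i"
  shows "relabel \<sigma> \<tau> (relabel \<sigma> \<tau> z) = z"
  using assms by (cases z) (auto simp: relabel_def)

lemma relabel_first_n:
  assumes "\<sigma> permutes {..<n}" "\<tau> permutes {..<n}"
  shows "relabel \<sigma> \<tau> z \<in> first_n n \<longleftrightarrow> z \<in> first_n n"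
proof (cases z)
  case (A i)
  have "\<sigma> i < n \<longleftrightarrow> i < n" using assms(1)
    by (metis lessThan_iff permutes_in_image)
  then show ?thesis using A by (auto simp: relabel_def first_n_def)
next
  case (B i)
  have "\<tau> i < n \<longleftrightarrow> i < n" using assms(2)
    by (metis lessThan_iff permutes_in_image)
  then show ?thesis using B by (auto simp: relabel_def first_n_def)
qed

lemma perm_restr_eq:
  assumes "\<sigma> permutes {..<n}" "\<tau> permutes {..<n}"
    "\<And>i. \<sigma> (\<sigma> i) = i" "\<And>i. \<tau> (\<tau> i) = i"
  shows "perm_restr_ord \<sigma> \<tau> L n = restr_ord (\<lambda>a b. L (relabel \<sigma> \<tau> a) (relabel \<sigma> \<tau> b)) n"
proof -
  let ?p = "relabel \<sigma> \<tau>"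
  have inv: "\<And>z. ?p (?p z) = z" by (rule relabel_invol[OF assms(3,4)])
  have fn: "\<And>z. ?p z \<in> first_n n \<longleftrightarrow> z \<in> first_n n" by (rule relabel_first_n[OF assms(1,2)])
  show ?thesis
  proof (intro set_eqI iffI)
    fix q assume "q \<in> perm_restr_ord \<sigma> \<tau> L n"
    then obtain a b where "(a,b) \<in> restr_ord L n" "q = (?p a, ?p b)"
      by (auto simp: perm_restr_ord_def)
    then show "q \<in> restr_ord (\<lambda>a b. L (?p a) (?p b)) n"
      using inv fn by (auto simp: restr_ord_def)
  next
    fix q assume q: "q \<in> restr_ord (\<lambda>a b. L (?p a) (?p b)) n"
    obtain a b where qq: "q = (a,b)" by (cases q)
    have "(?p a, ?p b) \<in> restr_ord L n" using q qq fn by (auto simp: restr_ord_def)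
    then have "map_prod ?p ?p (?p a, ?p b) \<in> perm_restr_ord \<sigma> \<tau> L n"
      unfolding perm_restr_ord_def by blast
    then show "q \<in> perm_restr_ord \<sigma> \<tau> L n" using inv qq by simp
  qed
qed

lemma cntw_relabel:
  assumes "\<sigma> permutes {..<n}" "\<tau> permutes {..<n}"
    "\<And>i. \<sigma> (\<sigma> i) = i" "\<And>i. \<tau> (\<tau> i) = i"
  shows "cntw (\<lambda>a b. L (relabel \<sigma> \<tau> a) (relabel \<sigma> \<tau> b)) n x y
       = cntw L n (relabel \<sigma> \<tau> x) (relabel \<sigma> \<tau> y)"
proof -
  let ?p = "relabel \<sigma> \<tau>"
  have inv: "\<And>z. ?p (?p z) = z" by (rule relabel_invol[OF assms(3,4)])
  have fn: "\<And>z. ?p z \<in> first_n n \<longleftrightarrow> z \<in> first_n n" by (rule relabel_first_n[OF assms(1,2)])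
  have inj: "inj ?p" by (metis inv injI)
  have "{z\<in>first_n n. btw (\<lambda>a b. L (?p a) (?p b)) x y z}
      = ?p ` {z\<in>first_n n. btw L (?p x) (?p y) z}"
  proof (intro set_eqI iffI)
    fix z assume "z \<in> {z\<in>first_n n. btw (\<lambda>a b. L (?p a) (?p b)) x y z}"
    then have "?p z \<in> {z\<in>first_n n. btw L (?p x) (?p y) z}" using fn by (auto simp: btw_def)
    then have "?p (?p z) \<in> ?p ` {z\<in>first_n n. btw L (?p x) (?p y) z}" by blast
    then show "z \<in> ?p ` {z\<in>first_n n. btw L (?p x) (?p y) z}" using inv by simp
  next
    fix z assume "z \<in> ?p ` {z\<in>first_n n. btw L (?p x) (?p y) z}"
    then show "z \<in> {z\<in>first_n n. btw (\<lambda>a b. L (?p a) (?p b)) x y z}"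
      using fn inv by (auto simp: btw_def)
  qed
  then show ?thesis unfolding cntw_def
    by (simp add: card_image inj_on_subset[OF inj])
qed

lemma restr_meas:
  assumes "\<And>a b. {w\<in>space M. L w a b} \<in> sets M"
  shows "{w\<in>space M. restr_ord (L w) n = R} \<in> sets M"
proof -
  let ?F = "first_n n \<times> first_n n"
  have eq: "restr_ord (L w) n = R \<longleftrightarrow> R \<subseteq> ?F \<and> (\<forall>p\<in>?F. L w (fst p) (snd p) = (p \<in> R))" for w
    by (auto simp: restr_ord_def)
  have [measurable]: "Measurable.pred M (\<lambda>w. L w a b)" for a b using assms by (simp add: Measurable.pred_def)
  have "Measurable.pred M (\<lambda>w. R \<subseteq> ?F \<and> (\<forall>p\<in>?F. L w (fst p) (snd p) = (p \<in> R)))"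
    by measurable
  then show ?thesis unfolding eq by (simp add: Measurable.pred_def)
qed

lemma sum_decomp:
  assumes "finite_measure M" "\<And>w. w \<in> space M \<Longrightarrow> f w \<in> P" "finite P"
    "\<And>R. {w\<in>space M. f w = R} \<in> sets M"
  shows "measure M {w\<in>space M. f w \<in> S} = (\<Sum>R\<in>S\<inter>P. measure M {w\<in>space M. f w = R})"
proof -
  interpret finite_measure M by fact
  have "{w\<in>space M. f w \<in> S} = (\<Union>R\<in>S\<inter>P. {w\<in>space M. f w = R})"
    using assms(2) by auto
  also have "measure M \<dots> = (\<Sum>R\<in>S\<inter>P. measure M {w\<in>space M. f w = R})"
    using assms(3,4) by (intro finite_measure_finite_Union) (auto simp: disjoint_family_on_def)
  finally show ?thesis .
qed

lemma exch_step:
  assumes M: "prob_space M" and rto: "random_total_order M lt" and ex: "exchangeable M lt"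
    and p: "\<sigma> permutes {..<n}" "\<tau> permutes {..<n}"
    and inv: "\<And>i. \<sigma> (\<sigma> i) = i" "\<And>i. \<tau> (\<tau> i) = i"
    and xy: "x \<in> first_n n" "y \<in> first_n n"
  shows "measure M {w\<in>space M. cntw (lt w) n x y \<le> m}
       = measure M {w\<in>space M. cntw (lt w) n (relabel \<sigma> \<tau> x) (relabel \<sigma> \<tau> y) \<le> m}"
proof -
  interpret prob_space M by fact
  let ?p = "relabel \<sigma> \<tau>"
  let ?L = "\<lambda>w a b. lt w (?p a) (?p b)"
  let ?S = "{R. cntR R n x y \<le> m}"
  let ?P = "Pow (first_n n \<times> first_n n)"
  have m1: "\<And>a b. {w\<in>space M. lt w a b} \<in> sets M" using rto by (simp add: random_total_order_def)
  then have m2: "\<And>a b. {w\<in>space M. ?L w a b} \<in> sets M" by blast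
  have fP: "finite ?P" by simp
  have inP: "\<And>L. restr_ord L n \<in> ?P" by (auto simp: restr_ord_def)
  have "measure M {w\<in>space M. cntw (lt w) n x y \<le> m} = measure M {w\<in>space M. restr_ord (lt w) n \<in> ?S}"
    using xy by (simp add: cntR_restr)
  also have "\<dots> = (\<Sum>R\<in>?S\<inter>?P. measure M {w\<in>space M. restr_ord (lt w) n = R})"
    by (rule sum_decomp[OF finite_measure_axioms _ fP restr_meas[OF m1]]) (rule inP)
  also have "\<dots> = (\<Sum>R\<in>?S\<inter>?P. measure M {w\<in>space M. restr_ord (?L w) n = R})"
  proof (rule sum.cong[OF refl])
    fix R
    have "measure M {w\<in>space M. restr_ord (lt w) n = R} = measure M {w\<in>space M. perm_restr_ord \<sigma> \<tau> (lt w) n = R}"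
      using ex p unfolding exchangeable_def by blast
    then show "measure M {w\<in>space M. restr_ord (lt w) n = R} = measure M {w\<in>space M. restr_ord (?L w) n = R}"
      by (simp add: perm_restr_eq[OF p inv])
  qed
  also have "\<dots> = measure M {w\<in>space M. restr_ord (?L w) n \<in> ?S}"
    by (rule sum_decomp[OF finite_measure_axioms _ fP restr_meas[OF m2], symmetric]) (rule inP)
  also have "\<dots> = measure M {w\<in>space M. cntw (?L w) n x y \<le> m}"
    using xy by (simp add: cntR_restr)
  also have "\<dots> = measure M {w\<in>space M. cntw (lt w) n (?p x) (?p y) \<le> m}"
    by (simp add: cntw_relabel[OF p inv])
  finally show ?thesis .
qed

lemma limsup_small:
  fixes c :: "nat \<Rightarrow> nat"
  assumes le: "\<And>n. c n \<le> n"
  defines "f \<equiv> \<lambda>n. ereal (real (c n) / (2 * real n))"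
  shows "0 \<le> real_of_ereal (limsup f)"
    and "real_of_ereal (limsup f) = 0 \<Longrightarrow> e > 0 \<Longrightarrow> eventually (\<lambda>n. real (c n) < e * real n) sequentially"
proof -
  have f0: "\<And>n. 0 \<le> f n" by (simp add: f_def)
  have f1: "\<And>n. f n \<le> ereal (1/2)"
  proof -
    fix n
    show "f n \<le> ereal (1/2)"
    proof (cases "n = 0")
      case True then show ?thesis by (simp add: f_def)
    next
      case False
      then have "real (c n) \<le> real n" using le by simp
      then show ?thesis using False by (simp add: f_def field_simps)
    qed
  qed
  have "0 \<le> liminf f" using f0 by (intro Liminf_bounded always_eventually) auto
  moreover have "liminf f \<le> limsup f" by (rule Liminf_le_Limsup) simp
  ultimately have lo: "0 \<le> limsup f" by (rule order_trans)
  have hi: "limsup f \<le> ereal (1/2)"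
    using f1 by (intro Limsup_bounded always_eventually) auto
  show "0 \<le> real_of_ereal (limsup f)" using lo by (simp add: real_of_ereal_pos)
  assume z: "real_of_ereal (limsup f) = 0" and e: "e > 0"
  have "limsup f = 0" using lo hi z
    by (cases "limsup f") auto
  then have "limsup f < ereal (e/2)" using e by simp
  then have ev: "eventually (\<lambda>n. f n < ereal (e/2)) sequentially" by (rule Limsup_lessD)
  then show "eventually (\<lambda>n. real (c n) < e * real n) sequentially"
    using eventually_gt_at_top[of 0]
  proof eventually_elim
    case (elim n)
    then have "real (c n) / (2 * real n) < e / 2" by (simp add: f_def)
    then show ?case using elim by (simp add: field_simps)
  qed
qed

definition ls :: "(nat \<Rightarrow> nat) \<Rightarrow> ereal" where
  "ls c = limsup (\<lambda>n. ereal (real (c n) / (2 * real n)))"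

lemma ls_bounds:
  assumes "\<And>n. c n \<le> n"
  shows "0 \<le> ls c" "ls c \<le> ereal (1/2)"
proof -
  let ?f = "\<lambda>n. ereal (real (c n) / (2 * real n))"
  have f0: "\<And>n. 0 \<le> ?f n" by simp
  have f1: "\<And>n. ?f n \<le> ereal (1/2)"
  proof -
    fix n
    show "?f n \<le> ereal (1/2)"
    proof (cases "n = 0")
      case True then show ?thesis by simp
    next
      case False
      then have "real (c n) \<le> real n" using assms by simp
      then show ?thesis using False by (simp add: field_simps)
    qed
  qed
  have "0 \<le> liminf ?f" using f0 by (intro Liminf_bounded always_eventually) auto
  moreover have "liminf ?f \<le> limsup ?f" by (rule Liminf_le_Limsup) simp
  ultimately show "0 \<le> ls c" unfolding ls_def by (rule order_trans)
  show "ls c \<le> ereal (1/2)" unfolding ls_def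
    using f1 by (intro Limsup_bounded always_eventually) auto
qed

lemma ls_real:
  assumes "\<And>n. c n \<le> n"
  shows "ls c = ereal (real_of_ereal (ls c))" "0 \<le> real_of_ereal (ls c)"
proof -
  have b: "0 \<le> ls c" "ls c \<le> ereal (1/2)" using ls_bounds[OF assms] by auto
  then show "ls c = ereal (real_of_ereal (ls c))"
    by (cases "ls c") auto
  show "0 \<le> real_of_ereal (ls c)" using b(1) by (simp add: real_of_ereal_pos)
qed

lemma ls_mono:
  assumes "\<And>n. c1 n \<le> n" "\<And>n. c2 n \<le> n" "\<And>n. c1 n \<le> c2 n"
  shows "real_of_ereal (ls c1) \<le> real_of_ereal (ls c2)"
proof -
  have "ls c1 \<le> ls c2" unfolding ls_def
    using assms(3) by (intro Limsup_mono always_eventually) (auto intro!: divide_right_mono)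
  then have "ereal (real_of_ereal (ls c1)) \<le> ereal (real_of_ereal (ls c2))"
    using ls_real(1)[OF assms(1)] ls_real(1)[OF assms(2)] by simp
  then show ?thesis by simp
qed

lemma ls_sub:
  assumes "\<And>n. c1 n \<le> n" "\<And>n. c2 n \<le> n" "\<And>n. c3 n \<le> n" "\<And>n. c3 n \<le> c1 n + c2 n + 1"
  shows "real_of_ereal (ls c3) \<le> real_of_ereal (ls c1) + real_of_ereal (ls c2)"
proof -
  let ?f = "\<lambda>c n. ereal (real (c n) / (2 * real n))"
  let ?h = "\<lambda>n. ereal ((1/2) / real n)"
  have pw: "?f c3 n \<le> (?f c1 n + ?f c2 n) + ?h n" for n
  proof (cases "n = 0")
    case True then show ?thesis by simp
  next
    case False
    have "real (c3 n) \<le> real (c1 n) + real (c2 n) + 1" using assms(4)[of n] by linarith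
    then have "real (c3 n) / (2 * real n) \<le> real (c1 n) / (2 * real n) + real (c2 n) / (2 * real n) + (1/2) / real n"
      using False by (simp add: field_simps)
    then show ?thesis by simp
  qed
  have hl: "limsup ?h = 0"
  proof -
    have "(\<lambda>n. (1/2::real) / real n) \<longlonglongrightarrow> 0" by (rule lim_const_over_n)
    then have "?h \<longlonglongrightarrow> ereal 0" by (rule tendsto_ereal)
    then show ?thesis using lim_imp_Limsup[of sequentially ?h 0] by (simp add: zero_ereal_def)
  qed
  have "ls c3 \<le> limsup (\<lambda>n. (?f c1 n + ?f c2 n) + ?h n)" unfolding ls_def
    using pw by (intro Limsup_mono always_eventually) auto
  also have "\<dots> \<le> limsup (\<lambda>n. ?f c1 n + ?f c2 n) + limsup ?h" by (rule ereal_limsup_add_mono)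
  also have "\<dots> \<le> (ls c1 + ls c2) + 0" unfolding hl ls_def
    by (intro add_mono ereal_limsup_add_mono) auto
  finally have "ereal (real_of_ereal (ls c3)) \<le> ereal (real_of_ereal (ls c1)) + ereal (real_of_ereal (ls c2))"
    using ls_real(1)[OF assms(1)] ls_real(1)[OF assms(2)] ls_real(1)[OF assms(3)] by simp
  then show ?thesis by simp
qed

definition cntC :: "(nat \<Rightarrow> I0) \<Rightarrow> (I0 \<Rightarrow> I0 \<Rightarrow> bool) \<Rightarrow> I0 \<Rightarrow> I0 \<Rightarrow> nat \<Rightarrow> nat" where
  "cntC C L u v n = card {k. k < n \<and> L u (C k) \<and> L (C k) v}"

lemma cntC_le: "cntC C L u v n \<le> n"
  unfolding cntC_def
  by (metis (no_types, lifting) card_lessThan card_mono finite_lessThan lessThan_iff mem_Collect_eq subsetI)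

lemma d_pos_ls: "d_pos L u v = real_of_ereal (ls (cntC A L u v)) + real_of_ereal (ls (cntC B L u v))"
  unfolding d_pos_def ls_def cntC_def by (rule refl)

lemma d_pos_nonneg: "0 \<le> d_pos L u v"
  unfolding d_pos_ls using ls_real(2)[OF cntC_le] by (simp add: add_nonneg_nonneg)

lemma cntC_mono1:
  assumes "sto L" "L b c"
  shows "cntC C L a b n \<le> cntC C L a c n"
  unfolding cntC_def using assms by (intro card_mono) (auto simp: sto_def)

lemma cntC_mono2:
  assumes "sto L" "L a b"
  shows "cntC C L b c n \<le> cntC C L a c n"
  unfolding cntC_def using assms by (intro card_mono) (auto simp: sto_def)

lemma cntC_sub:
  assumes "sto L" "inj C"
  shows "cntC C L a c n \<le> cntC C L a b n + cntC C L b c n + 1"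
proof -
  have tot: "\<And>x y. x \<noteq> y \<Longrightarrow> L x y \<or> L y x" using assms by (auto simp: sto_def)
  have sub1: "{k. C k = b} \<subseteq> {the_inv C b}" using assms(2) by (auto simp: the_inv_f_f)
  have finb: "finite {k. C k = b}" by (rule finite_subset[OF sub1]) simp
  have "{k. k < n \<and> L a (C k) \<and> L (C k) c} \<subseteq>
     {k. k < n \<and> L a (C k) \<and> L (C k) b} \<union> {k. k < n \<and> L b (C k) \<and> L (C k) c} \<union> {k. C k = b}"
    using tot by blast
  then have "cntC C L a c n \<le> card ({k. k < n \<and> L a (C k) \<and> L (C k) b} \<union> {k. k < n \<and> L b (C k) \<and> L (C k) c} \<union> {k. C k = b})"
    unfolding cntC_def using finb by (intro card_mono) auto
  also have "\<dots> \<le> card ({k. k < n \<and> L a (C k) \<and> L (C k) b} \<union> {k. k < n \<and> L b (C k) \<and> L (C k) c}) + card {k. C k = b}"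
    by (rule card_Un_le)
  also have "\<dots> \<le> cntC C L a b n + cntC C L b c n + card {k. C k = b}"
    unfolding cntC_def using card_Un_le by simp
  also have "card {k. C k = b} \<le> 1"
    using card_mono[OF _ sub1] by simp
  finally show ?thesis by simp
qed

lemma dpos_mono1:
  assumes "sto L" "L b c" shows "d_pos L a b \<le> d_pos L a c"
  unfolding d_pos_ls using assms
  by (intro add_mono ls_mono cntC_le cntC_mono1) auto

lemma dpos_mono2:
  assumes "sto L" "L a b" shows "d_pos L b c \<le> d_pos L a c"
  unfolding d_pos_ls using assms
  by (intro add_mono ls_mono cntC_le cntC_mono2) auto

lemma dpos_sub:
  assumes "sto L" shows "d_pos L a c \<le> d_pos L a b + d_pos L b c"
proof -
  have "real_of_ereal (ls (cntC A L a c)) \<le> real_of_ereal (ls (cntC A L a b)) + real_of_ereal (ls (cntC A L b c))"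
    using assms by (intro ls_sub cntC_le cntC_sub) (auto simp: inj_def)
  moreover have "real_of_ereal (ls (cntC B L a c)) \<le> real_of_ereal (ls (cntC B L a b)) + real_of_ereal (ls (cntC B L b c))"
    using assms by (intro ls_sub cntC_le cntC_sub) (auto simp: inj_def)
  ultimately show ?thesis unfolding d_pos_ls by linarith
qed

lemma D_eq:
  assumes "sto L" "L a b"
  shows "dist_ord L a b = d_pos L a b" "dist_ord L b a = d_pos L a b"
  using assms by (auto simp: dist_ord_def sto_def)

lemma D_sym: "sto L \<Longrightarrow> dist_ord L x y = dist_ord L y x"
  by (auto simp: dist_ord_def sto_def)

lemma D_nonneg: "0 \<le> dist_ord L x y"
  by (simp add: dist_ord_def d_pos_nonneg)

lemma tri3:
  assumes "sto L" "L a b" "L b c"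
  shows "dist_ord L a c \<le> dist_ord L a b + dist_ord L b c"
    "dist_ord L a b \<le> dist_ord L a c + dist_ord L c b"
    "dist_ord L b c \<le> dist_ord L b a + dist_ord L a c"
proof -
  have ac: "L a c" using assms by (auto simp: sto_def)
  note e1 = D_eq[OF assms(1,2)] and e2 = D_eq[OF assms(1,3)] and e3 = D_eq[OF assms(1) ac]
  show "dist_ord L a c \<le> dist_ord L a b + dist_ord L b c"
    using dpos_sub[OF assms(1), of a c b] e1 e2 e3 by simp
  show "dist_ord L a b \<le> dist_ord L a c + dist_ord L c b"
    using dpos_mono1[OF assms(1,3), of a] e1 e2 e3 d_pos_nonneg[of L b c] by simp
  show "dist_ord L b c \<le> dist_ord L b a + dist_ord L a c"
    using dpos_mono2[OF assms(1,2), of c] e1 e2 e3 d_pos_nonneg[of L a b] by simp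
qed

lemma metric_of_pos:
  assumes st: "sto L" and pos: "\<forall>x y. x \<noteq> y \<longrightarrow> 0 < dist_ord L x y"
  shows "is_metric (dist_ord L)"
proof -
  have tot: "\<And>x y. x \<noteq> y \<Longrightarrow> L x y \<or> L y x" using st by (auto simp: sto_def)
  have tr: "\<And>x y z. L x y \<Longrightarrow> L y z \<Longrightarrow> L x z" using st by (auto simp: sto_def)
  have irr: "\<And>x. \<not> L x x" using st by (auto simp: sto_def)
  have sym: "\<And>x y. dist_ord L x y = dist_ord L y x" using D_sym[OF st] by blast
  have t: "dist_ord L x z \<le> dist_ord L x y + dist_ord L y z" for x y z
  proof (cases "x = y \<or> y = z \<or> x = z")
    case True
    moreover have "dist_ord L x x = 0" for x by (simp add: dist_ord_def)
    ultimately show ?thesis using D_nonneg[of L x y] D_nonneg[of L y z] D_nonneg[of L x z] by auto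
  next
    case False
    then have d: "x \<noteq> y" "y \<noteq> z" "x \<noteq> z" by auto
    show ?thesis
    proof (cases "L x y")
      case xy: True
      show ?thesis
      proof (cases "L y z")
        case True then show ?thesis using tri3(1)[OF st xy True] by simp
      next
        case False
        then have zy: "L z y" using tot d by blast
        show ?thesis
        proof (cases "L x z")
          case True then show ?thesis using tri3(2)[OF st True zy] by simp
        next
          case False
          then have "L z x" using tot d by blast
          then show ?thesis using tri3(2)[OF st \<open>L z x\<close> xy] sym[of x z] sym[of z y] sym[of x y] by linarith
        qed
      qed
    next
      case False
      then have yx: "L y x" using tot d by blast
      show ?thesis
      proof (cases "L y z")
        case yz: True
        show ?thesis
        proof (cases "L x z")
          case True then show ?thesis using tri3(3)[OF st yx True] by simp
        next
          case False
          then have zx: "L z x" using tot d by blast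
          then show ?thesis using tri3(3)[OF st yz zx] sym[of x z] sym[of x y] sym[of z y] sym[of y z] by linarith
        qed
      next
        case False
        then have zy: "L z y" using tot d by blast
        then show ?thesis using tri3(1)[OF st zy yx] sym[of x z] sym[of x y] sym[of z y] sym[of y z] by linarith
      qed
    qed
  qed
  have z: "dist_ord L x y = 0 \<longleftrightarrow> x = y" for x y
  proof
    assume "dist_ord L x y = 0"
    then show "x = y" using pos by force
  qed (simp add: dist_ord_def)
  show ?thesis unfolding is_metric_def using z sym t by blast
qed

lemma cntw_sym: "cntw L n x y = cntw L n y x"
  unfolding cntw_def btw_def by (simp add: disj_commute)

lemma cntw_split:
  assumes "sto L" "L x y"
  shows "cntw L n x y = card {k. k < n \<and> L x (A k) \<and> L (A k) y} + card {k. k < n \<and> L x (B k) \<and> L (B k) y}"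
proof -
  have "{z\<in>first_n n. btw L x y z} = A ` {k. k < n \<and> L x (A k) \<and> L (A k) y} \<union> B ` {k. k < n \<and> L x (B k) \<and> L (B k) y}"
    using assms unfolding sto_def btw_def first_n_def by blast
  moreover have "card (A ` {k. k < n \<and> L x (A k) \<and> L (A k) y} \<union> B ` {k. k < n \<and> L x (B k) \<and> L (B k) y})
     = card (A ` {k. k < n \<and> L x (A k) \<and> L (A k) y}) + card (B ` {k. k < n \<and> L x (B k) \<and> L (B k) y})"
    by (rule card_Un_disjoint) auto
  ultimately show ?thesis unfolding cntw_def by (simp add: card_image inj_on_def)
qed

lemma det_pos_ordered:
  assumes "sto L" "L x y" "\<not> (0 < d_pos L x y)" "e > 0"
  shows "eventually (\<lambda>n. real (cntw L n x y) < e * real n) sequentially"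
proof -
  define cA where "cA = (\<lambda>n. card {k. k < n \<and> L x (A k) \<and> L (A k) y})"
  define cB where "cB = (\<lambda>n. card {k. k < n \<and> L x (B k) \<and> L (B k) y})"
  have leA: "\<And>n. cA n \<le> n" unfolding cA_def
    by (metis (no_types, lifting) card_lessThan card_mono finite_lessThan lessThan_iff mem_Collect_eq subsetI)
  have leB: "\<And>n. cB n \<le> n" unfolding cB_def
    by (metis (no_types, lifting) card_lessThan card_mono finite_lessThan lessThan_iff mem_Collect_eq subsetI)
  note a1 = limsup_small[of cA, OF leA] and b1 = limsup_small[of cB, OF leB]
  have d: "d_pos L x y = real_of_ereal (limsup (\<lambda>n. ereal (real (cA n) / (2 * real n))))
      + real_of_ereal (limsup (\<lambda>n. ereal (real (cB n) / (2 * real n))))"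
    by (simp add: d_pos_def cA_def cB_def)
  have za: "real_of_ereal (limsup (\<lambda>n. ereal (real (cA n) / (2 * real n)))) = 0"
    and zb: "real_of_ereal (limsup (\<lambda>n. ereal (real (cB n) / (2 * real n)))) = 0"
    using a1(1) b1(1) assms(3) d by linarith+
  have e2: "e/2 > 0" using assms by simp
  have "eventually (\<lambda>n. real (cA n) < e/2 * real n) sequentially" by (rule a1(2)[OF za e2])
  moreover have "eventually (\<lambda>n. real (cB n) < e/2 * real n) sequentially" by (rule b1(2)[OF zb e2])
  ultimately show ?thesis
  proof eventually_elim
    case (elim n)
    have "cntw L n x y = cA n + cB n" using cntw_split[OF assms(1,2)] by (simp add: cA_def cB_def)
    then show ?case using elim by simp
  qed
qed

lemma det_pos:
  assumes "sto L" "x \<noteq> y" "\<not> (0 < dist_ord L x y)" "e > 0"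
  shows "eventually (\<lambda>n. real (cntw L n x y) < e * real n) sequentially"
proof -
  have "L x y \<or> L y x" using assms by (auto simp: sto_def)
  then show ?thesis
  proof
    assume l: "L x y"
    then show ?thesis using det_pos_ordered[OF assms(1) l _ assms(4)] assms by (simp add: dist_ord_def)
  next
    assume l: "L y x"
    then have nl: "\<not> L x y" using assms(1) unfolding sto_def by blast
    have "eventually (\<lambda>n. real (cntw L n y x) < e * real n) sequentially"
      using det_pos_ordered[OF assms(1) l _ assms(4)] assms nl by (simp add: dist_ord_def)
    then show ?thesis by (simp add: cntw_sym)
  qed
qed

context
  fixes M :: "'w measure" and lt :: "'w \<Rightarrow> I0 \<Rightarrow> I0 \<Rightarrow> bool"
  assumes M: "prob_space M" and rto: "random_total_order M lt" and ex: "exchangeable M lt"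
begin

definition "EE n m x y = {w\<in>space M. cntw (lt w) n x y \<le> m}"

lemma EE_sym: "EE n m x y = EE n m y x"
  unfolding EE_def by (simp add: cntw_sym)

lemma step1:
  assumes C: "C = A \<or> C = B" and "i < n" "j < n" "k < n" "i \<noteq> j" "k \<noteq> j"
  shows "measure M (EE n m (C i) (C j)) = measure M (EE n m (C k) (C j))"
proof -
  have tp: "Transposition.transpose i k permutes {..<n}" using assms by (intro permutes_swap_id) auto
  have idp: "id permutes {..<n}" by (rule permutes_id)
  have inv1: "\<And>l. Transposition.transpose i k (Transposition.transpose i k l) = l" by simp
  have inv2: "\<And>l. id (id l) = l" by simp
  have fn: "C i \<in> first_n n" "C j \<in> first_n n" using C assms by (auto simp: first_n_def)
  from C show ?thesis
  proof
    assume CA: "C = A"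
    show ?thesis using exch_step[OF M rto ex tp idp inv1 inv2 fn, of m] CA assms
      by (simp add: EE_def relabel_def)
  next
    assume CB: "C = B"
    show ?thesis using exch_step[OF M rto ex idp tp inv2 inv1 fn, of m] CB assms
      by (simp add: EE_def relabel_def)
  qed
qed

lemma same_class:
  assumes C: "C = A \<or> C = B" and "i < n" "j < n" "i' < n" "j' < n" "i \<noteq> j" "i' \<noteq> j'"
  shows "measure M (EE n m (C i) (C j)) = measure M (EE n m (C i') (C j'))"
proof (cases "i' = j")
  case False
  have "measure M (EE n m (C i) (C j)) = measure M (EE n m (C i') (C j))"
    by (rule step1[OF C]) (use assms False in auto)
  also have "\<dots> = measure M (EE n m (C j) (C i'))" by (simp add: EE_sym)
  also have "\<dots> = measure M (EE n m (C j') (C i'))"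
    by (rule step1[OF C]) (use assms False in auto)
  also have "\<dots> = measure M (EE n m (C i') (C j'))" by (simp add: EE_sym)
  finally show ?thesis .
next
  case True
  show ?thesis
  proof (cases "j' = i")
    case True2: True
    show ?thesis using True True2 by (simp add: EE_sym)
  next
    case False2: False
  have "measure M (EE n m (C i) (C j)) = measure M (EE n m (C j) (C i))" by (simp add: EE_sym)
  also have "\<dots> = measure M (EE n m (C j') (C i))"
    by (rule step1[OF C]) (use assms True False2 in auto)
  also have "\<dots> = measure M (EE n m (C i) (C j'))" by (simp add: EE_sym)
  also have "\<dots> = measure M (EE n m (C i') (C j'))"
    by (rule step1[OF C]) (use assms True False2 in auto)
  finally show ?thesis .
  qed
qed

lemma mixed_class:
  assumes "i < n" "j < n" "i' < n" "j' < n"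
  shows "measure M (EE n m (A i) (B j)) = measure M (EE n m (A i') (B j'))"
proof -
  have tp1: "Transposition.transpose i i' permutes {..<n}" using assms by (intro permutes_swap_id) auto
  have tp2: "Transposition.transpose j j' permutes {..<n}" using assms by (intro permutes_swap_id) auto
  have fn: "A i \<in> first_n n" "B j \<in> first_n n" using assms by (auto simp: first_n_def)
  show ?thesis using exch_step[OF M rto ex tp1 tp2 _ _ fn, of m]
    by (simp add: EE_def relabel_def)
qed

lemma EE_meas:
  assumes "x \<in> first_n n" "y \<in> first_n n"
  shows "EE n m x y \<in> sets M"
proof -
  let ?S = "{R. cntR R n x y \<le> m}"
  let ?P = "Pow (first_n n \<times> first_n n)"
  have m1: "\<And>a b. {w\<in>space M. lt w a b} \<in> sets M" using rto by (simp add: random_total_order_def)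
  have "EE n m x y = (\<Union>R\<in>?S\<inter>?P. {w\<in>space M. restr_ord (lt w) n = R})"
    using assms by (auto simp: EE_def cntR_restr[symmetric] restr_ord_def)
  also have "\<dots> \<in> sets M" using restr_meas[OF m1] by (intro sets.finite_UN) auto
  finally show ?thesis .
qed

lemma sto_lt: "w \<in> space M \<Longrightarrow> sto (lt w)"
  using rto by (simp add: random_total_order_def sto_def)

lemma pointwise:
  assumes w: "w \<in> space M" and J: "finite J" and x: "x \<in> first_n n"
    and g: "inj_on g J" "g ` J \<subseteq> first_n n - {x}"
  shows "(\<Sum>j\<in>J. indicator (EE n m x (g j)) w) \<le> (2 * (real m + 1) :: real)"
proof -
  have "(\<Sum>j\<in>J. indicator (EE n m x (g j)) w :: real) = (\<Sum>j\<in>{j\<in>J. cntw (lt w) n x (g j) \<le> m}. 1)"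
    using w J by (auto simp: indicator_def EE_def sum.If_cases Collect_conj_eq Int_commute intro!: sum.cong)
  also have "\<dots> = real (card {j\<in>J. cntw (lt w) n x (g j) \<le> m})" by simp
  also have "card {j\<in>J. cntw (lt w) n x (g j) \<le> m} = card (g ` {j\<in>J. cntw (lt w) n x (g j) \<le> m})"
    by (rule card_image[symmetric]) (rule inj_on_subset[OF g(1)], auto)
  also have "\<dots> \<le> card {y\<in>first_n n. y \<noteq> x \<and> cntw (lt w) n x y \<le> m}"
    using g(2) by (intro card_mono) auto
  also have "\<dots> \<le> 2 * Suc m" by (rule cnt_close_le[OF sto_lt[OF w]])
  finally show ?thesis by simp
qed

lemma avg_generic:
  assumes fin: "finite I" and Jf: "\<And>i. i \<in> I \<Longrightarrow> finite (J i)"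
    and x: "\<And>i. i \<in> I \<Longrightarrow> x i \<in> first_n n"
    and g: "\<And>i. i \<in> I \<Longrightarrow> inj_on g (J i)" "\<And>i. i \<in> I \<Longrightarrow> g ` J i \<subseteq> first_n n - {x i}"
  shows "(\<Sum>i\<in>I. \<Sum>j\<in>J i. measure M (EE n m (x i) (g j))) \<le> real (card I) * (2 * (real m + 1))"
proof -
  interpret prob_space M by (rule M)
  have meas: "EE n m (x i) (g j) \<in> sets M" if "i \<in> I" "j \<in> J i" for i j
    using that x g(2)[of i] by (intro EE_meas) auto
  have int: "integrable M (indicator (EE n m (x i) (g j)) :: 'w \<Rightarrow> real)" if "i \<in> I" "j \<in> J i" for i j
    using meas[OF that] by (simp add: integrable_indicator_iff Int_absorb2 sets.sets_into_space less_top[symmetric])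
  have "(\<Sum>i\<in>I. \<Sum>j\<in>J i. measure M (EE n m (x i) (g j)))
      = (\<Sum>i\<in>I. \<Sum>j\<in>J i. integral\<^sup>L M (indicator (EE n m (x i) (g j)) :: 'w \<Rightarrow> real))"
    using meas by (auto intro!: sum.cong simp: Int_absorb2 sets.sets_into_space)
  also have "\<dots> = integral\<^sup>L M (\<lambda>w. \<Sum>i\<in>I. \<Sum>j\<in>J i. indicator (EE n m (x i) (g j)) w :: real)"
    using int by (simp add: Bochner_Integration.integral_sum)
  also have "\<dots> \<le> integral\<^sup>L M (\<lambda>w. real (card I) * (2 * (real m + 1)))"
  proof (rule integral_mono)
    show "integrable M (\<lambda>w. \<Sum>i\<in>I. \<Sum>j\<in>J i. indicator (EE n m (x i) (g j)) w :: real)"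
      using int by auto
    show "integrable M (\<lambda>w. real (card I) * (2 * (real m + 1)))" by simp
    fix w assume w: "w \<in> space M"
    have "(\<Sum>i\<in>I. \<Sum>j\<in>J i. indicator (EE n m (x i) (g j)) w :: real) \<le> (\<Sum>i\<in>I. 2 * (real m + 1))"
      using pointwise[OF w Jf x g] by (intro sum_mono) auto
    then show "(\<Sum>i\<in>I. \<Sum>j\<in>J i. indicator (EE n m (x i) (g j)) w :: real) \<le> real (card I) * (2 * (real m + 1))"
      by simp
  qed
  also have "\<dots> = real (card I) * (2 * (real m + 1))" by (simp add: prob_space)
  finally show ?thesis .
qed

lemma same_bound:
  assumes C: "C = A \<or> C = B" and "i < n" "j < n" "i \<noteq> j"
  shows "measure M (EE n m (C i) (C j)) \<le> 2 * (real m + 1) / (real n - 1)"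
proof -
  let ?p = "measure M (EE n m (C i) (C j))"
  have n2: "real n \<ge> 2" using assms by linarith
  have injC: "inj C" using C by (auto simp: inj_def)
  have "(\<Sum>i'\<in>{..<n}. \<Sum>j'\<in>{..<n}-{i'}. measure M (EE n m (C i') (C j')))
      = (\<Sum>i'\<in>{..<n}. \<Sum>j'\<in>{..<n}-{i'}. ?p)"
  proof (intro sum.cong refl)
    fix i' j' assume "i' \<in> {..<n}" "j' \<in> {..<n}-{i'}"
    then show "measure M (EE n m (C i') (C j')) = ?p"
      by (intro same_class[OF C, symmetric]) (use assms in auto)
  qed
  also have "\<dots> = real n * ((real n - 1) * ?p)"
    by (simp add: card_Diff_singleton of_nat_diff)
  finally have eq: "(\<Sum>i'\<in>{..<n}. \<Sum>j'\<in>{..<n}-{i'}. measure M (EE n m (C i') (C j'))) = real n * ((real n - 1) * ?p)" .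
  have "(\<Sum>i'\<in>{..<n}. \<Sum>j'\<in>{..<n}-{i'}. measure M (EE n m (C i') (C j'))) \<le> real (card {..<n}) * (2 * (real m + 1))"
    using C injC by (intro avg_generic) (auto simp: first_n_def inj_on_def)
  then have "real n * ((real n - 1) * ?p) \<le> real n * (2 * (real m + 1))" using eq by simp
  then have "(real n - 1) * ?p \<le> 2 * (real m + 1)" using n2 by (simp add: mult_le_cancel_left)
  then show ?thesis using n2 by (simp add: field_simps)
qed

lemma mixed_bound:
  assumes "i < n" "j < n" "n \<ge> 2"
  shows "measure M (EE n m (A i) (B j)) \<le> 2 * (real m + 1) / (real n - 1)"
proof -
  let ?p = "measure M (EE n m (A i) (B j))"
  have n2: "real n \<ge> 2" using assms by linarith
  have "(\<Sum>i'\<in>{..<n}. \<Sum>j'\<in>{..<n}. measure M (EE n m (A i') (B j')))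
      = (\<Sum>i'\<in>{..<n}. \<Sum>j'\<in>{..<n}. ?p)"
  proof (intro sum.cong refl)
    fix i' j' assume "i' \<in> {..<n}" "j' \<in> {..<n}"
    then show "measure M (EE n m (A i') (B j')) = ?p"
      by (intro mixed_class[symmetric]) (use assms in auto)
  qed
  also have "\<dots> = real n * (real n * ?p)" by simp
  finally have eq: "(\<Sum>i'\<in>{..<n}. \<Sum>j'\<in>{..<n}. measure M (EE n m (A i') (B j'))) = real n * (real n * ?p)" .
  have "(\<Sum>i'\<in>{..<n}. \<Sum>j'\<in>{..<n}. measure M (EE n m (A i') (B j'))) \<le> real (card {..<n}) * (2 * (real m + 1))"
    by (intro avg_generic) (auto simp: first_n_def inj_on_def)
  then have "real n * (real n * ?p) \<le> real n * (2 * (real m + 1))" using eq by simp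
  then have a: "real n * ?p \<le> 2 * (real m + 1)" using n2 by (simp add: mult_le_cancel_left)
  have "?p \<ge> 0" by simp
  then have "(real n - 1) * ?p \<le> real n * ?p" by (simp add: mult_right_mono)
  with a have "(real n - 1) * ?p \<le> 2 * (real m + 1)" by linarith
  then show ?thesis using n2 by (simp add: field_simps)
qed

lemma pair_bound:
  assumes "x \<noteq> y" "x \<in> first_n n" "y \<in> first_n n" "n \<ge> 2"
  shows "measure M (EE n m x y) \<le> 2 * (real m + 1) / (real n - 1)"
proof (cases x)
  case (A i)
  show ?thesis
  proof (cases y)
    case (A j) then show ?thesis using \<open>x = A i\<close> assms same_bound[of A i n j m] by (auto simp: first_n_def)
  next
    case (B j) then show ?thesis using \<open>x = A i\<close> assms mixed_bound[of i n j m] by (auto simp: first_n_def)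
  qed
next
  case (B i)
  show ?thesis
  proof (cases y)
    case (A j) then show ?thesis using \<open>x = B i\<close> assms mixed_bound[of j n i m] EE_sym[of n m x y]
      by (auto simp: first_n_def)
  next
    case (B j) then show ?thesis using \<open>x = B i\<close> assms same_bound[of B i n j m] by (auto simp: first_n_def)
  qed
qed

lemma arith_bound:
  fixes a q n :: nat
  assumes "a * q \<le> n" "1 \<le> q" "q \<le> n" "2 \<le> n"
  shows "2 * (real a + 1) / (real n - 1) \<le> 8 / real q"
proof -
  have h: "real a * real q \<le> real n" using assms(1) by (metis of_nat_le_iff of_nat_mult)
  have q: "real q \<ge> 1" "real q \<le> real n" and n: "real n \<ge> 2" using assms by auto
  have "2 * (real a + 1) * real q \<le> 8 * (real n - 1)" using h q n by (simp add: algebra_simps)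
  then show ?thesis using q n by (simp add: divide_simps)
qed

lemma AE_pos:
  assumes xy: "x \<noteq> y"
  shows "AE w in M. dist_ord (lt w) x y > 0"
proof -
  interpret prob_space M by (rule M)
  define idx where "idx = (\<lambda>z. case z of A i \<Rightarrow> i | B i \<Rightarrow> i)"
  define n0 where "n0 = idx x + idx y + 2"
  have fn: "x \<in> first_n n" "y \<in> first_n n" if "n \<ge> n0" for n
    using that by (cases x; cases y; auto simp: n0_def idx_def first_n_def)+
  define G where "G = (\<lambda>k N. (\<Inter>n\<in>{max N n0..}. EE n (n div Suc k) x y))"
  have Gm: "G k N \<in> sets M" for k N
    unfolding G_def
  proof (rule sets.countable_INT')
    show "countable {max N n0..}" by simp
    show "{max N n0..} \<noteq> {}" by auto
    show "(\<lambda>n. EE n (n div Suc k) x y) ` {max N n0..} \<subseteq> sets M"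
    proof (rule image_subsetI)
      fix n assume "n \<in> {max N n0..}"
      then have "n \<ge> n0" by simp
      then show "EE n (n div Suc k) x y \<in> sets M" using fn by (intro EE_meas) auto
    qed
  qed
  have inc: "incseq (G k)" for k
    unfolding incseq_def G_def by auto
  have GB: "measure M (G k N) \<le> 8 / real (Suc k)" for k N
  proof -
    define n where "n = max (max N n0) (Suc k)"
    have nn: "n \<ge> max N n0" "n \<ge> Suc k" "n \<ge> 2" by (auto simp: n_def n0_def)
    have "G k N \<subseteq> EE n (n div Suc k) x y" unfolding G_def using nn by auto
    then have "measure M (G k N) \<le> measure M (EE n (n div Suc k) x y)"
      using fn nn by (intro finite_measure_mono EE_meas) auto
    also have "\<dots> \<le> 2 * (real (n div Suc k) + 1) / (real n - 1)"
      using fn nn xy by (intro pair_bound) auto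
    also have "\<dots> \<le> 8 / real (Suc k)"
      by (rule arith_bound[OF div_times_less_eq_dividend]) (use nn in auto)
    finally show ?thesis .
  qed
  define U where "U = (\<lambda>k. \<Union>N. G k N)"
  have Um: "U k \<in> sets M" for k unfolding U_def using Gm by auto
  have UB: "measure M (U k) \<le> 8 / real (Suc k)" for k
  proof -
    have "(\<lambda>N. measure M (G k N)) \<longlonglongrightarrow> measure M (\<Union>N. G k N)"
      using Gm inc by (intro finite_Lim_measure_incseq) auto
    then show ?thesis unfolding U_def using GB by (intro LIMSEQ_le_const2) auto
  qed
  define Z where "Z = (\<Inter>k. U k)"
  have Zm: "Z \<in> sets M" unfolding Z_def using Um by auto
  have Z0: "measure M Z = 0"
  proof (rule ccontr)
    assume "measure M Z \<noteq> 0"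
    then have p: "measure M Z > 0" by (simp add: zero_less_measure_iff)
    obtain k :: nat where k: "8 / measure M Z < real k" using reals_Archimedean2 by blast
    then have "8 < real k * measure M Z" using p by (simp add: divide_less_eq)
    then have "8 < real (Suc k) * measure M Z" using p
      by (smt (verit) mult_right_mono of_nat_Suc)
    then have "8 / real (Suc k) < measure M Z" by (simp add: divide_less_eq mult.commute)
    moreover have "measure M Z \<le> measure M (U k)" unfolding Z_def using Um by (intro finite_measure_mono) auto
    ultimately show False using UB[of k] by linarith
  qed
  have Znull: "Z \<in> null_sets M" using Zm Z0 by (simp add: emeasure_eq_measure null_sets_def)
  show ?thesis
  proof (rule AE_I'[OF Znull], safe)
    fix w assume w: "w \<in> space M" and np: "\<not> 0 < dist_ord (lt w) x y"
    show "w \<in> Z" unfolding Z_def U_def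
    proof
      fix k
      have e: "(1 / real (Suc k) :: real) > 0" by simp
      have "eventually (\<lambda>n. real (cntw (lt w) n x y) < 1 / real (Suc k) * real n) sequentially"
        by (rule det_pos[OF sto_lt[OF w] xy np e])
      then obtain N where N: "\<And>n. n \<ge> N \<Longrightarrow> real (cntw (lt w) n x y) < 1 / real (Suc k) * real n"
        unfolding eventually_sequentially by blast
      have "w \<in> G k N" unfolding G_def
      proof
        fix n assume "n \<in> {max N n0..}"
        then have "real (cntw (lt w) n x y) < 1 / real (Suc k) * real n" using N by auto
        then have "real (cntw (lt w) n x y * Suc k) < real n" by (simp add: field_simps)
        then have "cntw (lt w) n x y * Suc k \<le> n" by linarith
        then have "cntw (lt w) n x y \<le> n div Suc k" by (simp add: less_eq_div_iff_mult_less_eq)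
        then show "w \<in> EE n (n div Suc k) x y" using w by (simp add: EE_def)
      qed
      then show "w \<in> (\<Union>N. G k N)" by blast
    qed
  qed
qed

end

theorem mainTheorem4:
  fixes M :: "'w measure" and lt :: "'w \<Rightarrow> I0 \<Rightarrow> I0 \<Rightarrow> bool"
  assumes "prob_space M"
    and "random_total_order M lt"
    and "exchangeable M lt"
  shows "(\<forall>x y. x \<noteq> y \<longrightarrow> (AE w in M. dist_ord (lt w) x y > 0))
         \<and> (AE w in M. is_metric (dist_ord (lt w)))"
proof -
  have p1: "\<forall>x y. x \<noteq> y \<longrightarrow> (AE w in M. dist_ord (lt w) x y > 0)"
    by (intro allI impI AE_pos[OF assms])
  define dec :: "bool \<times> nat \<Rightarrow> I0" where "dec = (\<lambda>(b,i). if b then A i else B i)"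
  have surj: "\<exists>p. dec p = z" for z
    by (cases z) (auto simp: dec_def intro: exI[of _ "(True,_)"] exI[of _ "(False,_)"])
  have "\<forall>pq::(bool\<times>nat)\<times>(bool\<times>nat). AE w in M. dec (fst pq) \<noteq> dec (snd pq) \<longrightarrow> dist_ord (lt w) (dec (fst pq)) (dec (snd pq)) > 0"
  proof
    fix pq :: "(bool\<times>nat)\<times>(bool\<times>nat)"
    show "AE w in M. dec (fst pq) \<noteq> dec (snd pq) \<longrightarrow> dist_ord (lt w) (dec (fst pq)) (dec (snd pq)) > 0"
    proof (cases "dec (fst pq) = dec (snd pq)")
      case True then show ?thesis by (intro AE_I2) blast
    next
      case False
      have "AE w in M. dist_ord (lt w) (dec (fst pq)) (dec (snd pq)) > 0" by (rule AE_pos[OF assms False])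
      then show ?thesis by (rule AE_mp) (intro AE_I2 impI, assumption)
    qed
  qed
  then have ae: "AE w in M. \<forall>pq::(bool\<times>nat)\<times>(bool\<times>nat). dec (fst pq) \<noteq> dec (snd pq) \<longrightarrow> dist_ord (lt w) (dec (fst pq)) (dec (snd pq)) > 0"
    by (rule AE_all_countable[THEN iffD2])
  have st: "AE w in M. sto (lt w)"
    by (rule AE_I2) (rule sto_lt[OF assms])
  have "AE w in M. is_metric (dist_ord (lt w))"
    using ae st
  proof eventually_elim
    case (elim w)
    have "\<forall>x y. x \<noteq> y \<longrightarrow> 0 < dist_ord (lt w) x y"
    proof (intro allI impI)
      fix x y :: I0 assume "x \<noteq> y"
      obtain p where p: "dec p = x" using surj by blast
      obtain q where q: "dec q = y" using surj by blast
      show "0 < dist_ord (lt w) x y" using spec[OF elim(1), of "(p,q)"] p q \<open>x \<noteq> y\<close> by simp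
    qed
    then show ?case by (rule metric_of_pos[OF elim(2)])
  qed
  with p1 show ?thesis by (intro conjI)
qed

end
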